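(* Let $G$ be a group and $L,R$ nonempty subsets of $G$, and consider $2\mathrm{S}(G;L,R)$. (1) There exist two words in $L$ of different lengths whose values are weakly connected to each other if and only if there is a word in $L$ of positive length whose value is weakly connected to $e$. (2) For $n\ge 1$, there exists a word $w_{L,n}$ in $L$ of length $n$ with $w_{L,n}\sim e$ if and only if there exists a word $w_{L^{-1},n}$ in $L^{-1}$ of length $n$ with $w_{L^{-1},n}\sim e$. The analogous statements with $R$ in place of $L$ also hold.
   Context: For nonempty subsets $L,R$ of a group $G$, the two-sided group digraph $2\mathrm{S}(G;L,R)$ has vertex set $G$ and a directed arc $(g,h)$ if and only if $h=l^{-1}gr$ for some $l\in L$, $r\in R$. A word in a set $S$ of length $n$ is a product $s_1\cdots s_n$ with $s_i\in S$; $w_{S,n}$ denotes the element given by such a word. Vertex $g$ is weakly connected to $h$, written $g\sim h$, if there is a sequence $g=g_0,g_1,\dots,g_n=h$ such that for each $i$ either $(g_{i-1},g_i)$ or $(g_i,g_{i-1})$ is an arc. *)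

theory Defs
  imports "HOL-Algebra.Group"
begin

definition twoS_arcs :: "('a, 'b) monoid_scheme \<Rightarrow> 'a set \<Rightarrow> 'a set \<Rightarrow> ('a \<times> 'a) set" where
  "twoS_arcs G L R = {(g, h). g \<in> carrier G \<and> h \<in> carrier G \<and>
     (\<exists>l\<in>L. \<exists>r\<in>R. h = inv\<^bsub>G\<^esub> l \<otimes>\<^bsub>G\<^esub> g \<otimes>\<^bsub>G\<^esub> r)}"

definition weakly_connected :: "('a, 'b) monoid_scheme \<Rightarrow> 'a set \<Rightarrow> 'a set \<Rightarrow> 'a \<Rightarrow> 'a \<Rightarrow> bool" where
  "weakly_connected G L R g h \<longleftrightarrow>
     (g, h) \<in> (twoS_arcs G L R \<union> (twoS_arcs G L R)\<inverse>)\<^sup>*"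

definition word_val :: "('a, 'b) monoid_scheme \<Rightarrow> 'a list \<Rightarrow> 'a" where
  "word_val G xs = foldr (\<lambda>x y. x \<otimes>\<^bsub>G\<^esub> y) xs \<one>\<^bsub>G\<^esub>"

definition set_inv :: "('a, 'b) monoid_scheme \<Rightarrow> 'a set \<Rightarrow> 'a set" where
  "set_inv G S = (\<lambda>x. inv\<^bsub>G\<^esub> x) ` S"

end

theory Submission
  imports Defs
begin

lemma (in group) inv_cancel_left' [simp]:
  "x \<in> carrier G \<Longrightarrow> y \<in> carrier G \<Longrightarrow> inv x \<otimes> (x \<otimes> y) = y"
  by (simp add: m_assoc[symmetric])
lemma (in group) cancel_inv_left' [simp]:
  "x \<in> carrier G \<Longrightarrow> y \<in> carrier G \<Longrightarrow> x \<otimes> (inv x \<otimes> y) = y"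
  by (simp add: m_assoc[symmetric])

locale twoS = group G for G (structure) +
  fixes L R
  assumes L: "L \<subseteq> carrier G" and Lne: "L \<noteq> {}"
    and R: "R \<subseteq> carrier G" and Rne: "R \<noteq> {}"
begin

abbreviation "wc \<equiv> weakly_connected G L R"
abbreviation "A \<equiv> twoS_arcs G L R"

lemma wc_refl: "wc g g" by (simp add: weakly_connected_def)

lemma wc_trans: "wc g h \<Longrightarrow> wc h k \<Longrightarrow> wc g k"
  unfolding weakly_connected_def by (rule rtrancl_trans)

lemma wc_sym: "wc g h \<Longrightarrow> wc h g"
proof -
  assume "wc g h"
  hence "(h, g) \<in> ((A \<union> A\<inverse>)\<inverse>)\<^sup>*" unfolding weakly_connected_def
    by (simp add: rtrancl_converseI)
  moreover have "(A \<union> A\<inverse>)\<inverse> = A \<union> A\<inverse>" by auto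
  ultimately show ?thesis unfolding weakly_connected_def by simp
qed

lemma arc: "g \<in> carrier G \<Longrightarrow> l \<in> L \<Longrightarrow> r \<in> R \<Longrightarrow> wc g (inv l \<otimes> g \<otimes> r)"
  unfolding weakly_connected_def
  apply (rule r_into_rtrancl)
  using L R by (auto simp: twoS_arcs_def)

lemma arc': "g \<in> carrier G \<Longrightarrow> l \<in> L \<Longrightarrow> r \<in> R \<Longrightarrow> h = inv l \<otimes> g \<otimes> r \<Longrightarrow> wc g h"
  using arc by simp

lemma wc_map:
  assumes f: "\<And>y. y \<in> carrier G \<Longrightarrow> f y \<in> carrier G"
    and st: "\<And>y l r. y \<in> carrier G \<Longrightarrow> l \<in> L \<Longrightarrow> r \<in> R \<Longrightarrow> wc (f y) (f (inv l \<otimes> y \<otimes> r))"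
    and "wc g h"
  shows "wc (f g) (f h)"
proof -
  have "(g, h) \<in> (A \<union> A\<inverse>)\<^sup>*" using assms(3) unfolding weakly_connected_def .
  thus ?thesis
  proof (induction rule: rtrancl_induct)
    case base then show ?case by (rule wc_refl)
  next
    case (step y z)
    from step(2) have "wc (f y) (f z)"
    proof
      assume "(y, z) \<in> A"
      then obtain l r where "y \<in> carrier G" "l \<in> L" "r \<in> R" "z = inv l \<otimes> y \<otimes> r"
        by (auto simp: twoS_arcs_def)
      thus ?thesis using st by simp
    next
      assume "(y, z) \<in> A\<inverse>"
      then obtain l r where "z \<in> carrier G" "l \<in> L" "r \<in> R" "y = inv l \<otimes> z \<otimes> r"
        by (auto simp: twoS_arcs_def)
      thus ?thesis using st wc_sym by simp
    qed
    thus ?case using step(3) wc_trans by blast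
  qed
qed

definition "rstab c \<longleftrightarrow> c \<in> carrier G \<and> (\<forall>g\<in>carrier G. wc g (g \<otimes> c))"
definition "lstab c \<longleftrightarrow> c \<in> carrier G \<and> (\<forall>g\<in>carrier G. wc g (c \<otimes> g))"

lemma rstab_RR: assumes "r1 \<in> R" "r2 \<in> R" shows "rstab (inv r1 \<otimes> r2)"
proof -
  obtain l where l: "l \<in> L" using Lne by auto
  have c: "l \<in> carrier G" "r1 \<in> carrier G" "r2 \<in> carrier G" using l assms L R by auto
  { fix g assume g: "g \<in> carrier G"
    let ?x = "l \<otimes> g \<otimes> inv r1"
    have "wc ?x g" by (rule arc'[OF _ l assms(1)]) (use c g in \<open>simp_all add: m_assoc\<close>)
    moreover have "wc ?x (g \<otimes> (inv r1 \<otimes> r2))" by (rule arc'[OF _ l assms(2)]) (use c g in \<open>simp_all add: m_assoc\<close>)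
    ultimately have "wc g (g \<otimes> (inv r1 \<otimes> r2))" using wc_sym wc_trans by blast }
  thus ?thesis using c by (simp add: rstab_def)
qed

lemma rstab_mult: "rstab c \<Longrightarrow> rstab d \<Longrightarrow> rstab (c \<otimes> d)"
  unfolding rstab_def by (metis m_assoc m_closed wc_trans)

lemma rstab_conj1: assumes "rstab c" "r \<in> R" shows "rstab (r \<otimes> c \<otimes> inv r)"
proof -
  obtain l where l: "l \<in> L" using Lne by auto
  have c: "l \<in> carrier G" "r \<in> carrier G" "c \<in> carrier G" using l assms L R by (auto simp: rstab_def)
  { fix g assume g: "g \<in> carrier G"
    let ?g = "g \<otimes> (r \<otimes> c \<otimes> inv r)"
    have 1: "wc ?g (inv l \<otimes> g \<otimes> r \<otimes> c)" by (rule arc'[OF _ l assms(2)]) (use c g in \<open>simp_all add: m_assoc\<close>)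
    have "wc (inv l \<otimes> g \<otimes> r) (inv l \<otimes> g \<otimes> r \<otimes> c)" using assms(1) c g by (simp add: rstab_def)
    moreover have "wc g (inv l \<otimes> g \<otimes> r)" using arc c g l assms by simp
    ultimately have "wc g ?g" using 1 wc_sym wc_trans by blast }
  thus ?thesis using c by (simp add: rstab_def)
qed

lemma rstab_conj2: assumes "rstab c" "r \<in> R" shows "rstab (inv r \<otimes> c \<otimes> r)"
proof -
  obtain l where l: "l \<in> L" using Lne by auto
  have c: "l \<in> carrier G" "r \<in> carrier G" "c \<in> carrier G" using l assms L R by (auto simp: rstab_def)
  { fix g assume g: "g \<in> carrier G"
    let ?g = "g \<otimes> (inv r \<otimes> c \<otimes> r)"
    have 1: "wc (l \<otimes> g \<otimes> inv r \<otimes> c) ?g" by (rule arc'[OF _ l assms(2)]) (use c g in \<open>simp_all add: m_assoc\<close>)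
    have "wc (l \<otimes> g \<otimes> inv r) (l \<otimes> g \<otimes> inv r \<otimes> c)" using assms(1) c g by (simp add: rstab_def)
    moreover have "wc (l \<otimes> g \<otimes> inv r) g" by (rule arc'[OF _ l assms(2)]) (use c g in \<open>simp_all add: m_assoc\<close>)
    ultimately have "wc g ?g" using 1 wc_sym wc_trans by blast }
  thus ?thesis using c by (simp add: rstab_def)
qed

lemma RM: assumes "wc g h" "r \<in> R" shows "wc (g \<otimes> r) (h \<otimes> r)"
proof (rule wc_map[OF _ _ assms(1)])
  fix y l r' assume y: "y \<in> carrier G" and l: "l \<in> L" and r': "r' \<in> R"
  have c: "l \<in> carrier G" "r \<in> carrier G" "r' \<in> carrier G" using l r' assms L R by auto
  let ?x = "inv l \<otimes> (y \<otimes> r) \<otimes> r'"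
  have 1: "wc (y \<otimes> r) ?x" using arc c y l r' by simp
  have "rstab ((inv r' \<otimes> (inv r \<otimes> r') \<otimes> r') \<otimes> (inv r' \<otimes> r))"
    by (intro rstab_mult rstab_conj2 rstab_RR r' assms(2))
  hence "wc ?x (?x \<otimes> ((inv r' \<otimes> (inv r \<otimes> r') \<otimes> r') \<otimes> (inv r' \<otimes> r)))"
    using c y by (simp add: rstab_def)
  moreover have "?x \<otimes> ((inv r' \<otimes> (inv r \<otimes> r') \<otimes> r') \<otimes> (inv r' \<otimes> r)) = inv l \<otimes> y \<otimes> r' \<otimes> r"
    using c y by (simp add: m_assoc)
  ultimately show "wc (y \<otimes> r) (inv l \<otimes> y \<otimes> r' \<otimes> r)" using 1 wc_trans by metis
qed (use assms R in auto)

lemma RMinv: assumes "wc g h" "r \<in> R" shows "wc (g \<otimes> inv r) (h \<otimes> inv r)"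
proof (rule wc_map[OF _ _ assms(1)])
  fix y l r' assume y: "y \<in> carrier G" and l: "l \<in> L" and r': "r' \<in> R"
  have c: "l \<in> carrier G" "r \<in> carrier G" "r' \<in> carrier G" using l r' assms L R by auto
  let ?x = "inv l \<otimes> (y \<otimes> inv r) \<otimes> r'"
  have 1: "wc (y \<otimes> inv r) ?x" using arc c y l r' by simp
  have "rstab ((inv r' \<otimes> r) \<otimes> (r \<otimes> (inv r \<otimes> r') \<otimes> inv r))"
    by (intro rstab_mult rstab_conj1 rstab_RR r' assms(2))
  hence "wc ?x (?x \<otimes> ((inv r' \<otimes> r) \<otimes> (r \<otimes> (inv r \<otimes> r') \<otimes> inv r)))"
    using c y by (simp add: rstab_def)
  moreover have "?x \<otimes> ((inv r' \<otimes> r) \<otimes> (r \<otimes> (inv r \<otimes> r') \<otimes> inv r)) = inv l \<otimes> y \<otimes> r' \<otimes> inv r"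
    using c y by (simp add: m_assoc)
  ultimately show "wc (y \<otimes> inv r) (inv l \<otimes> y \<otimes> r' \<otimes> inv r)" using 1 wc_trans by metis
qed (use assms R in auto)

lemma lstab_LL: assumes "l1 \<in> L" "l2 \<in> L" shows "lstab (inv l2 \<otimes> l1)"
proof -
  obtain r where r: "r \<in> R" using Rne by auto
  have c: "r \<in> carrier G" "l1 \<in> carrier G" "l2 \<in> carrier G" using r assms L R by auto
  { fix g assume g: "g \<in> carrier G"
    let ?x = "l1 \<otimes> g \<otimes> inv r"
    have "wc ?x g" by (rule arc'[OF _ assms(1) r]) (use c g in \<open>simp_all add: m_assoc\<close>)
    moreover have "wc ?x ((inv l2 \<otimes> l1) \<otimes> g)" by (rule arc'[OF _ assms(2) r]) (use c g in \<open>simp_all add: m_assoc\<close>)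
    ultimately have "wc g ((inv l2 \<otimes> l1) \<otimes> g)" using wc_sym wc_trans by blast }
  thus ?thesis using c by (simp add: lstab_def)
qed

lemma lstab_mult: "lstab c \<Longrightarrow> lstab d \<Longrightarrow> lstab (c \<otimes> d)"
  unfolding lstab_def by (metis m_assoc m_closed wc_trans)

lemma lstab_conj1: assumes "lstab c" "l \<in> L" shows "lstab (l \<otimes> c \<otimes> inv l)"
proof -
  obtain r where r: "r \<in> R" using Rne by auto
  have c: "r \<in> carrier G" "l \<in> carrier G" "c \<in> carrier G" using r assms L R by (auto simp: lstab_def)
  { fix g assume g: "g \<in> carrier G"
    let ?g = "(l \<otimes> c \<otimes> inv l) \<otimes> g"
    have 1: "wc ?g (c \<otimes> (inv l \<otimes> g \<otimes> r))" by (rule arc'[OF _ assms(2) r]) (use c g in \<open>simp_all add: m_assoc\<close>)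
    have "wc (inv l \<otimes> g \<otimes> r) (c \<otimes> (inv l \<otimes> g \<otimes> r))" using assms(1) c g by (simp add: lstab_def)
    moreover have "wc g (inv l \<otimes> g \<otimes> r)" using arc c g r assms by simp
    ultimately have "wc g ?g" using 1 wc_sym wc_trans by blast }
  thus ?thesis using c by (simp add: lstab_def)
qed

lemma lstab_conj2: assumes "lstab c" "l \<in> L" shows "lstab (inv l \<otimes> c \<otimes> l)"
proof -
  obtain r where r: "r \<in> R" using Rne by auto
  have c: "r \<in> carrier G" "l \<in> carrier G" "c \<in> carrier G" using r assms L R by (auto simp: lstab_def)
  { fix g assume g: "g \<in> carrier G"
    let ?g = "(inv l \<otimes> c \<otimes> l) \<otimes> g"
    have 1: "wc (c \<otimes> (l \<otimes> g \<otimes> inv r)) ?g" by (rule arc'[OF _ assms(2) r]) (use c g in \<open>simp_all add: m_assoc\<close>)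
    have "wc (l \<otimes> g \<otimes> inv r) (c \<otimes> (l \<otimes> g \<otimes> inv r))" using assms(1) c g by (simp add: lstab_def)
    moreover have "wc (l \<otimes> g \<otimes> inv r) g" by (rule arc'[OF _ assms(2) r]) (use c g in \<open>simp_all add: m_assoc\<close>)
    ultimately have "wc g ?g" using 1 wc_sym wc_trans by blast }
  thus ?thesis using c by (simp add: lstab_def)
qed

lemma LM: assumes "wc g h" "l \<in> L" shows "wc (l \<otimes> g) (l \<otimes> h)"
proof (rule wc_map[OF _ _ assms(1)])
  fix y l' r' assume y: "y \<in> carrier G" and l': "l' \<in> L" and r': "r' \<in> R"
  have c: "l \<in> carrier G" "l' \<in> carrier G" "r' \<in> carrier G" using l' r' assms L R by auto
  let ?x = "inv l' \<otimes> (l \<otimes> y) \<otimes> r'"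
  have 1: "wc (l \<otimes> y) ?x" using arc c y l' r' by simp
  have "lstab ((l \<otimes> (inv l' \<otimes> l) \<otimes> inv l) \<otimes> (inv l \<otimes> l'))"
    by (intro lstab_mult lstab_conj1 lstab_LL l' assms(2))
  hence "wc ?x (((l \<otimes> (inv l' \<otimes> l) \<otimes> inv l) \<otimes> (inv l \<otimes> l')) \<otimes> ?x)"
    using c y by (simp add: lstab_def)
  moreover have "((l \<otimes> (inv l' \<otimes> l) \<otimes> inv l) \<otimes> (inv l \<otimes> l')) \<otimes> ?x = l \<otimes> (inv l' \<otimes> y \<otimes> r')"
    using c y by (simp add: m_assoc)
  ultimately show "wc (l \<otimes> y) (l \<otimes> (inv l' \<otimes> y \<otimes> r'))" using 1 wc_trans by metis
qed (use assms L in auto)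

lemma LMinv: assumes "wc g h" "l \<in> L" shows "wc (inv l \<otimes> g) (inv l \<otimes> h)"
proof (rule wc_map[OF _ _ assms(1)])
  fix y l' r' assume y: "y \<in> carrier G" and l': "l' \<in> L" and r': "r' \<in> R"
  have c: "l \<in> carrier G" "l' \<in> carrier G" "r' \<in> carrier G" using l' r' assms L R by auto
  let ?x = "inv l' \<otimes> (inv l \<otimes> y) \<otimes> r'"
  have 1: "wc (inv l \<otimes> y) ?x" using arc c y l' r' by simp
  have "lstab ((inv l \<otimes> (inv l' \<otimes> l) \<otimes> l) \<otimes> (inv l \<otimes> l'))"
    by (intro lstab_mult lstab_conj2 lstab_LL l' assms(2))
  hence "wc ?x (((inv l \<otimes> (inv l' \<otimes> l) \<otimes> l) \<otimes> (inv l \<otimes> l')) \<otimes> ?x)"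
    using c y by (simp add: lstab_def)
  moreover have "((inv l \<otimes> (inv l' \<otimes> l) \<otimes> l) \<otimes> (inv l \<otimes> l')) \<otimes> ?x = inv l \<otimes> (inv l' \<otimes> y \<otimes> r')"
    using c y by (simp add: m_assoc)
  ultimately show "wc (inv l \<otimes> y) (inv l \<otimes> (inv l' \<otimes> y \<otimes> r'))" using 1 wc_trans by metis
qed (use assms L in auto)

lemma wc_carrier: "wc g h \<Longrightarrow> g \<noteq> h \<Longrightarrow> g \<in> carrier G \<and> h \<in> carrier G"
  unfolding weakly_connected_def
  by (auto elim: converse_rtranclE rtranclE simp: twoS_arcs_def)

lemma pow_right:
  assumes c: "c \<in> carrier G" and P: "\<And>g h. wc g h \<Longrightarrow> wc (g \<otimes> c) (h \<otimes> c)"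
  shows "wc g h \<Longrightarrow> wc (g \<otimes> c [^] (k::nat)) (h \<otimes> c [^] k)"
proof (induction k)
  case 0 then show ?case using wc_carrier[of g h] by (cases "g = h") (auto simp: wc_refl)
next
  case (Suc k)
  have "wc (g \<otimes> c [^] k \<otimes> c) (h \<otimes> c [^] k \<otimes> c)" using P Suc by blast
  then show ?case using wc_carrier[of g h] Suc(2) c by (cases "g = h") (auto simp: wc_refl m_assoc)
qed

lemma pow_left:
  assumes c: "c \<in> carrier G" and P: "\<And>g h. wc g h \<Longrightarrow> wc (c \<otimes> g) (c \<otimes> h)"
  shows "wc g h \<Longrightarrow> wc (c [^] (k::nat) \<otimes> g) (c [^] k \<otimes> h)"
proof (induction k arbitrary: g h)
  case 0 then show ?case using wc_carrier[of g h] by (cases "g = h") (auto simp: wc_refl)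
next
  case (Suc k)
  have "wc (c [^] k \<otimes> (c \<otimes> g)) (c [^] k \<otimes> (c \<otimes> h))" using P Suc by blast
  then show ?case using wc_carrier[of g h] Suc(2) c by (cases "g = h") (auto simp: wc_refl m_assoc)
qed

lemma word_closed: "set xs \<subseteq> carrier G \<Longrightarrow> word_val G xs \<in> carrier G"
  by (induction xs) (auto simp: word_val_def)

lemma word_Cons: "word_val G (x # xs) = x \<otimes> word_val G xs"
  by (simp add: word_val_def)

lemma wordL: assumes "set xs \<subseteq> L" "r \<in> R" "g \<in> carrier G"
  shows "wc (word_val G xs \<otimes> g) (g \<otimes> r [^] length xs)"
  using assms(1,3)
proof (induction xs arbitrary: g)
  case Nil then show ?case by (simp add: word_val_def wc_refl)
next
  case (Cons l xs)
  have c: "l \<in> carrier G" "r \<in> carrier G" "word_val G xs \<in> carrier G"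
    using Cons.prems L R assms(2) word_closed by auto
  have 1: "wc (l \<otimes> (word_val G xs \<otimes> g)) (word_val G xs \<otimes> (g \<otimes> r))"
    by (rule arc') (use c Cons.prems assms(2) in \<open>auto simp: m_assoc\<close>)
  have 2: "wc (word_val G xs \<otimes> (g \<otimes> r)) (g \<otimes> r \<otimes> r [^] length xs)"
    using Cons c by auto
  have e1: "word_val G (l # xs) \<otimes> g = l \<otimes> (word_val G xs \<otimes> g)"
    using c Cons.prems by (simp add: word_Cons m_assoc)
  have e2: "g \<otimes> r [^] length (l # xs) = g \<otimes> r \<otimes> r [^] length xs"
    using c Cons.prems nat_pow_Suc2[of r "length xs"] by (metis length_Cons m_assoc nat_pow_closed)
  show ?case unfolding e1 e2 using wc_trans[OF 1 2] .
qed

lemma set_inv_carrier: "S \<subseteq> carrier G \<Longrightarrow> set_inv G S \<subseteq> carrier G"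
  by (auto simp: set_inv_def)

lemma wordLinv: assumes "set xs \<subseteq> set_inv G L" "r \<in> R" "g \<in> carrier G"
  shows "wc (word_val G xs \<otimes> g) (g \<otimes> inv r [^] length xs)"
  using assms(1,3)
proof (induction xs arbitrary: g)
  case Nil then show ?case by (simp add: word_val_def wc_refl)
next
  case (Cons x xs)
  then obtain l where l: "l \<in> L" "x = inv l" by (auto simp: set_inv_def)
  have c: "l \<in> carrier G" "r \<in> carrier G" "word_val G xs \<in> carrier G"
    using Cons.prems L R assms(2) word_closed l set_inv_carrier[OF L] by auto
  have 1: "wc (word_val G xs \<otimes> (g \<otimes> inv r)) (inv l \<otimes> (word_val G xs \<otimes> g))"
    by (rule arc'[OF _ l(1) assms(2)]) (use c Cons.prems in \<open>auto simp: m_assoc\<close>)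
  have 2: "wc (word_val G xs \<otimes> (g \<otimes> inv r)) (g \<otimes> inv r \<otimes> inv r [^] length xs)"
    using Cons c by auto
  have e1: "word_val G (x # xs) \<otimes> g = inv l \<otimes> (word_val G xs \<otimes> g)"
    using c Cons.prems l by (simp add: word_Cons m_assoc)
  have e2: "g \<otimes> inv r [^] length (x # xs) = g \<otimes> inv r \<otimes> inv r [^] length xs"
    using c Cons.prems nat_pow_Suc2[of "inv r" "length xs"] by (metis length_Cons m_assoc nat_pow_closed inv_closed)
  show ?case unfolding e1 e2 using wc_trans[OF wc_sym[OF 1] 2] .
qed

lemma wordR: assumes "set xs \<subseteq> R" "l \<in> L" "g \<in> carrier G"
  shows "wc (g \<otimes> word_val G xs) (l [^] length xs \<otimes> g)"
  using assms(1,3)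
proof (induction xs arbitrary: g)
  case Nil then show ?case by (simp add: word_val_def wc_refl)
next
  case (Cons r xs)
  have c: "l \<in> carrier G" "r \<in> carrier G" "word_val G xs \<in> carrier G"
    using Cons.prems L R assms(2) word_closed by auto
  have 1: "wc (g \<otimes> r \<otimes> word_val G xs) (l [^] length xs \<otimes> (g \<otimes> r))"
    using Cons c by auto
  have 2: "wc (l \<otimes> (l [^] length xs \<otimes> g)) (l [^] length xs \<otimes> (g \<otimes> r))"
    by (rule arc'[OF _ assms(2)]) (use c Cons.prems in \<open>auto simp: m_assoc\<close>)
  have e1: "g \<otimes> word_val G (r # xs) = g \<otimes> r \<otimes> word_val G xs"
    using c Cons.prems by (simp add: word_Cons m_assoc)
  have e2: "l [^] length (r # xs) \<otimes> g = l \<otimes> (l [^] length xs \<otimes> g)"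
    using c Cons.prems nat_pow_Suc2[of l "length xs"] by (simp only: length_Cons m_assoc nat_pow_closed)
  show ?case unfolding e1 e2 using wc_trans[OF 1 wc_sym[OF 2]] .
qed

lemma wordRinv: assumes "set xs \<subseteq> set_inv G R" "l \<in> L" "g \<in> carrier G"
  shows "wc (g \<otimes> word_val G xs) (inv l [^] length xs \<otimes> g)"
  using assms(1,3)
proof (induction xs arbitrary: g)
  case Nil then show ?case by (simp add: word_val_def wc_refl)
next
  case (Cons x xs)
  then obtain r where r: "r \<in> R" "x = inv r" by (auto simp: set_inv_def)
  have c: "l \<in> carrier G" "r \<in> carrier G" "word_val G xs \<in> carrier G"
    using Cons.prems L R assms(2) word_closed r set_inv_carrier[OF R] by auto
  have 1: "wc (g \<otimes> inv r \<otimes> word_val G xs) (inv l [^] length xs \<otimes> (g \<otimes> inv r))"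
    using Cons c r by auto
  have 2: "wc (inv l [^] length xs \<otimes> (g \<otimes> inv r)) (inv l \<otimes> (inv l [^] length xs \<otimes> g))"
    by (rule arc'[OF _ assms(2) r(1)]) (use c Cons.prems in \<open>auto simp: m_assoc\<close>)
  have e1: "g \<otimes> word_val G (x # xs) = g \<otimes> inv r \<otimes> word_val G xs"
    using c Cons.prems r by (simp add: word_Cons m_assoc)
  have e2: "inv l [^] length (x # xs) \<otimes> g = inv l \<otimes> (inv l [^] length xs \<otimes> g)"
    using c Cons.prems nat_pow_Suc2[of "inv l" "length xs"] by (simp only: length_Cons m_assoc nat_pow_closed inv_closed)
  show ?case unfolding e1 e2 using wc_trans[OF 1 2] .
qed

lemma word_nil: "word_val G [] = \<one>" by (simp add: word_val_def)

lemma wL: assumes "set xs \<subseteq> L" "r \<in> R" shows "wc (word_val G xs) (r [^] length xs)"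
  using wordL[OF assms one_closed] word_closed[of xs] assms L R by auto
lemma wLinv: assumes "set xs \<subseteq> set_inv G L" "r \<in> R" shows "wc (word_val G xs) (inv r [^] length xs)"
  using wordLinv[OF assms one_closed] word_closed[of xs] set_inv_carrier[OF L] assms R by auto
lemma wR: assumes "set xs \<subseteq> R" "l \<in> L" shows "wc (word_val G xs) (l [^] length xs)"
  using wordR[OF assms one_closed] word_closed[of xs] assms L R by auto
lemma wRinv: assumes "set xs \<subseteq> set_inv G R" "l \<in> L" shows "wc (word_val G xs) (inv l [^] length xs)"
  using wordRinv[OF assms one_closed] word_closed[of xs] set_inv_carrier[OF R] assms L by auto

lemma auxL: assumes "set xs \<subseteq> L" "set ys \<subseteq> L" "length xs < length ys"
    "wc (word_val G xs) (word_val G ys)"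
  shows "\<exists>zs. set zs \<subseteq> L \<and> length zs > 0 \<and> wc (word_val G zs) \<one>"
proof -
  obtain r where r: "r \<in> R" using Rne by auto
  obtain l where l: "l \<in> L" using Lne by auto
  have rc: "r \<in> carrier G" using r R by auto
  define m where "m = length xs"
  define n where "n = length ys"
  have "wc (r [^] m) (r [^] n)" using wL[OF assms(1) r] wL[OF assms(2) r] assms(4) wc_sym wc_trans
    unfolding m_def n_def by blast
  hence "wc (r [^] m \<otimes> inv r [^] m) (r [^] n \<otimes> inv r [^] m)"
    using pow_right[OF inv_closed[OF rc], of k g h for k g h] RMinv[OF _ r] by blast
  moreover have "r [^] m \<otimes> inv r [^] m = \<one>" using rc by (simp add: nat_pow_inv)
  moreover have "r [^] n \<otimes> inv r [^] m = r [^] (n - m)"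
  proof -
    have "r [^] n = r [^] (n - m) \<otimes> r [^] m" using nat_pow_mult[OF rc, of "n-m" m] assms(3)
      unfolding m_def n_def by simp
    thus ?thesis using rc by (simp add: nat_pow_inv m_assoc)
  qed
  ultimately have 1: "wc \<one> (r [^] (n - m))" by simp
  have "wc (word_val G (replicate (n - m) l)) (r [^] (n - m))" using wL[of "replicate (n-m) l" r] l r by (auto simp: set_replicate_conv_if)
  hence "wc (word_val G (replicate (n - m) l)) \<one>" using 1 wc_sym wc_trans by blast
  thus ?thesis using l assms(3) m_def n_def
    by (intro exI[of _ "replicate (n - m) l"]) auto
qed

lemma auxR: assumes "set xs \<subseteq> R" "set ys \<subseteq> R" "length xs < length ys"
    "wc (word_val G xs) (word_val G ys)"
  shows "\<exists>zs. set zs \<subseteq> R \<and> length zs > 0 \<and> wc (word_val G zs) \<one>"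
proof -
  obtain r where r: "r \<in> R" using Rne by auto
  obtain l where l: "l \<in> L" using Lne by auto
  have lc: "l \<in> carrier G" using l L by auto
  define m where "m = length xs"
  define n where "n = length ys"
  have "wc (l [^] m) (l [^] n)" using wR[OF assms(1) l] wR[OF assms(2) l] assms(4) wc_sym wc_trans
    unfolding m_def n_def by blast
  hence "wc (inv l [^] m \<otimes> l [^] m) (inv l [^] m \<otimes> l [^] n)"
    using pow_left[OF inv_closed[OF lc], of k g h for k g h] LMinv[OF _ l] by blast
  moreover have "inv l [^] m \<otimes> l [^] m = \<one>" using lc by (simp add: nat_pow_inv)
  moreover have "inv l [^] m \<otimes> l [^] n = l [^] (n - m)"
  proof -
    have "l [^] n = l [^] m \<otimes> l [^] (n - m)" using nat_pow_mult[OF lc, of m "n-m"] assms(3)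
      unfolding m_def n_def by simp
    thus ?thesis using lc by (simp add: nat_pow_inv m_assoc[symmetric])
  qed
  ultimately have 1: "wc \<one> (l [^] (n - m))" by simp
  have "wc (word_val G (replicate (n - m) r)) (l [^] (n - m))" using wR[of "replicate (n-m) r" l] l r by (auto simp: set_replicate_conv_if)
  hence "wc (word_val G (replicate (n - m) r)) \<one>" using 1 wc_sym wc_trans by blast
  thus ?thesis using r assms(3) m_def n_def
    by (intro exI[of _ "replicate (n - m) r"]) auto
qed

lemma part1L:
  "(\<exists>xs ys. set xs \<subseteq> L \<and> set ys \<subseteq> L \<and> length xs \<noteq> length ys \<and> wc (word_val G xs) (word_val G ys))
   \<longleftrightarrow> (\<exists>xs. set xs \<subseteq> L \<and> length xs > 0 \<and> wc (word_val G xs) \<one>)"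
proof
  assume "\<exists>xs ys. set xs \<subseteq> L \<and> set ys \<subseteq> L \<and> length xs \<noteq> length ys \<and> wc (word_val G xs) (word_val G ys)"
  then obtain xs ys where h: "set xs \<subseteq> L" "set ys \<subseteq> L" "length xs \<noteq> length ys" "wc (word_val G xs) (word_val G ys)" by blast
  show "\<exists>xs. set xs \<subseteq> L \<and> length xs > 0 \<and> wc (word_val G xs) \<one>"
  proof (cases "length xs < length ys")
    case True then show ?thesis using auxL h by blast
  next
    case False then show ?thesis using auxL[of ys xs] h wc_sym by simp
  qed
next
  assume "\<exists>xs. set xs \<subseteq> L \<and> length xs > 0 \<and> wc (word_val G xs) \<one>"
  then obtain xs where "set xs \<subseteq> L" "length xs > 0" "wc (word_val G xs) \<one>" by blast
  thus "\<exists>xs ys. set xs \<subseteq> L \<and> set ys \<subseteq> L \<and> length xs \<noteq> length ys \<and> wc (word_val G xs) (word_val G ys)"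
    by (intro exI[of _ xs] exI[of _ "[]"]) (auto simp: word_nil)
qed

lemma part1R:
  "(\<exists>xs ys. set xs \<subseteq> R \<and> set ys \<subseteq> R \<and> length xs \<noteq> length ys \<and> wc (word_val G xs) (word_val G ys))
   \<longleftrightarrow> (\<exists>xs. set xs \<subseteq> R \<and> length xs > 0 \<and> wc (word_val G xs) \<one>)"
proof
  assume "\<exists>xs ys. set xs \<subseteq> R \<and> set ys \<subseteq> R \<and> length xs \<noteq> length ys \<and> wc (word_val G xs) (word_val G ys)"
  then obtain xs ys where h: "set xs \<subseteq> R" "set ys \<subseteq> R" "length xs \<noteq> length ys" "wc (word_val G xs) (word_val G ys)" by blast
  show "\<exists>xs. set xs \<subseteq> R \<and> length xs > 0 \<and> wc (word_val G xs) \<one>"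
  proof (cases "length xs < length ys")
    case True then show ?thesis using auxR h by blast
  next
    case False then show ?thesis using auxR[of ys xs] h wc_sym by simp
  qed
next
  assume "\<exists>xs. set xs \<subseteq> R \<and> length xs > 0 \<and> wc (word_val G xs) \<one>"
  then obtain xs where "set xs \<subseteq> R" "length xs > 0" "wc (word_val G xs) \<one>" by blast
  thus "\<exists>xs ys. set xs \<subseteq> R \<and> set ys \<subseteq> R \<and> length xs \<noteq> length ys \<and> wc (word_val G xs) (word_val G ys)"
    by (intro exI[of _ xs] exI[of _ "[]"]) (auto simp: word_nil)
qed

lemma part2L:
  "(\<exists>xs. set xs \<subseteq> L \<and> length xs = n \<and> wc (word_val G xs) \<one>)
   \<longleftrightarrow> (\<exists>xs. set xs \<subseteq> set_inv G L \<and> length xs = n \<and> wc (word_val G xs) \<one>)"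
proof -
  obtain r where r: "r \<in> R" using Rne by auto
  obtain l where l: "l \<in> L" using Lne by auto
  have rc: "r \<in> carrier G" and lc: "l \<in> carrier G" using r R l L by auto
  have e: "r [^] n \<otimes> inv r [^] n = \<one>" "inv r [^] n \<otimes> r [^] n = \<one>" using rc by (simp_all add: nat_pow_inv)
  show ?thesis
  proof
    assume "\<exists>xs. set xs \<subseteq> L \<and> length xs = n \<and> wc (word_val G xs) \<one>"
    then obtain xs where h: "set xs \<subseteq> L" "length xs = n" "wc (word_val G xs) \<one>" by blast
    have "wc (r [^] n) \<one>" using wL[OF h(1) r] h wc_sym wc_trans by blast
    hence "wc (r [^] n \<otimes> inv r [^] n) (\<one> \<otimes> inv r [^] n)"
      using pow_right[OF inv_closed[OF rc], of k g h for k g h] RMinv[OF _ r] by blast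
    hence 1: "wc \<one> (inv r [^] n)" using e rc by simp
    have "set (replicate n (inv l)) \<subseteq> set_inv G L" using l by (auto simp: set_inv_def)
    hence "wc (word_val G (replicate n (inv l))) (inv r [^] n)" using wLinv r by fastforce
    hence "wc (word_val G (replicate n (inv l))) \<one>" using 1 wc_sym wc_trans by blast
    thus "\<exists>xs. set xs \<subseteq> set_inv G L \<and> length xs = n \<and> wc (word_val G xs) \<one>"
      using \<open>set (replicate n (inv l)) \<subseteq> set_inv G L\<close> by (intro exI[of _ "replicate n (inv l)"]) auto
  next
    assume "\<exists>xs. set xs \<subseteq> set_inv G L \<and> length xs = n \<and> wc (word_val G xs) \<one>"
    then obtain xs where h: "set xs \<subseteq> set_inv G L" "length xs = n" "wc (word_val G xs) \<one>" by blast
    have "wc (inv r [^] n) \<one>" using wLinv[OF h(1) r] h wc_sym wc_trans by blast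
    hence "wc (inv r [^] n \<otimes> r [^] n) (\<one> \<otimes> r [^] n)"
      using pow_right[OF rc, of k g h for k g h] RM[OF _ r] by blast
    hence 1: "wc \<one> (r [^] n)" using e rc by simp
    have "wc (word_val G (replicate n l)) (r [^] n)" using wL[of "replicate n l" r] r l by (auto simp: set_replicate_conv_if)
    hence "wc (word_val G (replicate n l)) \<one>" using 1 wc_sym wc_trans by blast
    thus "\<exists>xs. set xs \<subseteq> L \<and> length xs = n \<and> wc (word_val G xs) \<one>"
      using l by (intro exI[of _ "replicate n l"]) auto
  qed
qed

lemma part2R:
  "(\<exists>xs. set xs \<subseteq> R \<and> length xs = n \<and> wc (word_val G xs) \<one>)
   \<longleftrightarrow> (\<exists>xs. set xs \<subseteq> set_inv G R \<and> length xs = n \<and> wc (word_val G xs) \<one>)"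
proof -
  obtain r where r: "r \<in> R" using Rne by auto
  obtain l where l: "l \<in> L" using Lne by auto
  have rc: "r \<in> carrier G" and lc: "l \<in> carrier G" using r R l L by auto
  have e: "l [^] n \<otimes> inv l [^] n = \<one>" "inv l [^] n \<otimes> l [^] n = \<one>" using lc by (simp_all add: nat_pow_inv)
  show ?thesis
  proof
    assume "\<exists>xs. set xs \<subseteq> R \<and> length xs = n \<and> wc (word_val G xs) \<one>"
    then obtain xs where h: "set xs \<subseteq> R" "length xs = n" "wc (word_val G xs) \<one>" by blast
    have "wc (l [^] n) \<one>" using wR[OF h(1) l] h wc_sym wc_trans by blast
    hence "wc (inv l [^] n \<otimes> l [^] n) (inv l [^] n \<otimes> \<one>)"
      using pow_left[OF inv_closed[OF lc], of k g h for k g h] LMinv[OF _ l] by blast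
    hence 1: "wc \<one> (inv l [^] n)" using e lc by simp
    have "set (replicate n (inv r)) \<subseteq> set_inv G R" using r by (auto simp: set_inv_def)
    hence "wc (word_val G (replicate n (inv r))) (inv l [^] n)" using wRinv l by fastforce
    hence "wc (word_val G (replicate n (inv r))) \<one>" using 1 wc_sym wc_trans by blast
    thus "\<exists>xs. set xs \<subseteq> set_inv G R \<and> length xs = n \<and> wc (word_val G xs) \<one>"
      using \<open>set (replicate n (inv r)) \<subseteq> set_inv G R\<close> by (intro exI[of _ "replicate n (inv r)"]) auto
  next
    assume "\<exists>xs. set xs \<subseteq> set_inv G R \<and> length xs = n \<and> wc (word_val G xs) \<one>"
    then obtain xs where h: "set xs \<subseteq> set_inv G R" "length xs = n" "wc (word_val G xs) \<one>" by blast
    have "wc (inv l [^] n) \<one>" using wRinv[OF h(1) l] h wc_sym wc_trans by blast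
    hence "wc (l [^] n \<otimes> inv l [^] n) (l [^] n \<otimes> \<one>)"
      using pow_left[OF lc, of k g h for k g h] LM[OF _ l] by blast
    hence 1: "wc \<one> (l [^] n)" using e lc by simp
    have "wc (word_val G (replicate n r)) (l [^] n)" using wR[of "replicate n r" l] r l by (auto simp: set_replicate_conv_if)
    hence "wc (word_val G (replicate n r)) \<one>" using 1 wc_sym wc_trans by blast
    thus "\<exists>xs. set xs \<subseteq> R \<and> length xs = n \<and> wc (word_val G xs) \<one>"
      using r by (intro exI[of _ "replicate n r"]) auto
  qed
qed

end

theorem mainTheorem3:
  fixes G :: "('a, 'b) monoid_scheme" and L R :: "'a set"
  assumes "group G"
    and "L \<subseteq> carrier G" and "L \<noteq> {}"
    and "R \<subseteq> carrier G" and "R \<noteq> {}"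
  shows
    "((\<exists>xs ys. set xs \<subseteq> L \<and> set ys \<subseteq> L \<and> length xs \<noteq> length ys \<and>
         weakly_connected G L R (word_val G xs) (word_val G ys))
      \<longleftrightarrow> (\<exists>xs. set xs \<subseteq> L \<and> length xs > 0 \<and>
         weakly_connected G L R (word_val G xs) \<one>\<^bsub>G\<^esub>))
   \<and> (\<forall>n::nat. n \<ge> 1 \<longrightarrow>
       ((\<exists>xs. set xs \<subseteq> L \<and> length xs = n \<and> weakly_connected G L R (word_val G xs) \<one>\<^bsub>G\<^esub>)
        \<longleftrightarrow> (\<exists>xs. set xs \<subseteq> set_inv G L \<and> length xs = n \<and>
              weakly_connected G L R (word_val G xs) \<one>\<^bsub>G\<^esub>)))
   \<and> ((\<exists>xs ys. set xs \<subseteq> R \<and> set ys \<subseteq> R \<and> length xs \<noteq> length ys \<and>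
         weakly_connected G L R (word_val G xs) (word_val G ys))
      \<longleftrightarrow> (\<exists>xs. set xs \<subseteq> R \<and> length xs > 0 \<and>
         weakly_connected G L R (word_val G xs) \<one>\<^bsub>G\<^esub>))
   \<and> (\<forall>n::nat. n \<ge> 1 \<longrightarrow>
       ((\<exists>xs. set xs \<subseteq> R \<and> length xs = n \<and> weakly_connected G L R (word_val G xs) \<one>\<^bsub>G\<^esub>)
        \<longleftrightarrow> (\<exists>xs. set xs \<subseteq> set_inv G R \<and> length xs = n \<and>
              weakly_connected G L R (word_val G xs) \<one>\<^bsub>G\<^esub>)))"
proof -
  interpret twoS G L R by (intro twoS.intro twoS_axioms.intro assms)
  show ?thesis using part1L part1R part2L part2R by blast
qed

end
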